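(* Let $\mathbb K$ be a field, $R=\mathbb K[x,y,z]$, and let $X=\{P_1,\ldots,P_m\}\subset\mathbb P^2_{\mathbb K}$ be a set of $m$ distinct $\mathbb K$-points, not all collinear. Let $\Lambda_X$ be the collection (with repetitions) of linear forms obtained as follows: for every line $L\subset\mathbb P^2$ containing $s\ge2$ points of $X$, include a linear form defining $L$ exactly $s-1$ times. Let $N=\#\Lambda_X$ (counted with repetitions). Then $N\le\binom m2$ and $$\sqrt{I_{N-(m-1)+1}(\Lambda_X)}=I(X),$$ i.e. $\mathcal V_{N-m+2}(\Lambda_X)=X$. Moreover, every $P_i$ lies on exactly $m-1$ lines of $\Lambda_X$ counted with repetition, while every point $Q\notin X$ which is an intersection point of two distinct lines of $\Lambda_X$ lies on at most $m-2$ lines of $\Lambda_X$ counted with repetition.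
   Context: For a collection $\Lambda=(\ell_1,\ldots,\ell_n)$ of linear forms (possibly some proportional or repeated) and $1\le a\le n$, $I_a(\Lambda)$ is the ideal generated by all products $\ell_{i_1}\cdots\ell_{i_a}$ with $1\le i_1<\cdots<i_a\le n$, and $\mathcal V_a(\Lambda)$ is the projective variety defined by $\sqrt{I_a(\Lambda)}$. $I(X)$ is the (radical) ideal of all polynomials vanishing on $X$. *)

theory Defs
  imports Main "HOL-Library.Poly_Mapping" "HOL-Library.Multiset"
begin

datatype var = VX | VY | VZ

lemma UNIV_var: "(UNIV :: var set) = {VX, VY, VZ}"
  using var.exhaust by blast

instance var :: finite
  by standard (simp add: UNIV_var)

text \<open>Polynomials in K[x,y,z]: finitely supported maps from monomials
  (exponent vectors) to coefficients, with the convolution product.\<close>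
type_synonym 'a mpoly3 = "(var \<Rightarrow>\<^sub>0 nat) \<Rightarrow>\<^sub>0 'a"

text \<open>A (representative of a) point of the projective plane: a vector in K^3.\<close>
type_synonym 'a pt3 = "var \<Rightarrow> 'a"

definition mdeg :: "(var \<Rightarrow>\<^sub>0 nat) \<Rightarrow> nat" where
  "mdeg \<mu> = (\<Sum>v\<in>UNIV. Poly_Mapping.lookup \<mu> v)"

definition homogeneous :: "'a::zero mpoly3 \<Rightarrow> bool" where
  "homogeneous f \<longleftrightarrow> (\<exists>d. \<forall>\<mu>\<in>Poly_Mapping.keys f. mdeg \<mu> = d)"

definition linear_form :: "'a::zero mpoly3 \<Rightarrow> bool" where
  "linear_form l \<longleftrightarrow> l \<noteq> 0 \<and> (\<forall>\<mu>\<in>Poly_Mapping.keys l. mdeg \<mu> = 1)"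

definition eval3 :: "'a::comm_semiring_1 mpoly3 \<Rightarrow> 'a pt3 \<Rightarrow> 'a" where
  "eval3 f P = (\<Sum>\<mu>\<in>Poly_Mapping.keys f. Poly_Mapping.lookup f \<mu> * (\<Prod>v\<in>UNIV. P v ^ Poly_Mapping.lookup \<mu> v))"

definition proj_eq :: "'a::field pt3 \<Rightarrow> 'a pt3 \<Rightarrow> bool" where
  "proj_eq P Q \<longleftrightarrow> (\<exists>c. c \<noteq> 0 \<and> (\<forall>v. Q v = c * P v))"

definition same_line :: "'a::field mpoly3 \<Rightarrow> 'a mpoly3 \<Rightarrow> bool" where
  "same_line l l' \<longleftrightarrow> (\<exists>c. c \<noteq> 0 \<and> l' = Poly_Mapping.map (\<lambda>a. c * a) l)"

definition ideal_gen :: "'a::comm_ring_1 set \<Rightarrow> 'a set" where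
  "ideal_gen S = {\<Sum>g\<in>F. r g * g | F r. finite F \<and> F \<subseteq> S}"

definition radical :: "'a::comm_ring_1 set \<Rightarrow> 'a set" where
  "radical I = {f. \<exists>k::nat. f ^ k \<in> I}"

text \<open>I_a(Lambda): generated by all products of a entries (distinct indices)
  of the collection Lambda, given as a multiset.\<close>
definition I_a :: "nat \<Rightarrow> 'a::comm_ring_1 multiset \<Rightarrow> 'a set" where
  "I_a a \<Lambda> = ideal_gen {prod_mset M | M. M \<subseteq># \<Lambda> \<and> size M = a}"

definition vanishing_ideal :: "'a::field pt3 set \<Rightarrow> 'a mpoly3 set" where
  "vanishing_ideal X = ideal_gen {f. homogeneous f \<and> (\<forall>P\<in>X. eval3 f P = 0)}"

end

theory Submission
  imports Defs "HOL-Computational_Algebra.Polynomial"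
begin



section \<open>General evaluation homomorphism\<close>

definition monG :: "(var \<Rightarrow> 'b::comm_semiring_1) \<Rightarrow> (var \<Rightarrow>\<^sub>0 nat) \<Rightarrow> 'b" where
  "monG P \<mu> = (\<Prod>v\<in>UNIV. P v ^ Poly_Mapping.lookup \<mu> v)"

definition evalG :: "('a::zero \<Rightarrow> 'b::comm_semiring_1) \<Rightarrow> (var \<Rightarrow> 'b) \<Rightarrow> 'a mpoly3 \<Rightarrow> 'b" where
  "evalG h P f = (\<Sum>\<mu>\<in>Poly_Mapping.keys f. h (Poly_Mapping.lookup f \<mu>) * monG P \<mu>)"

lemma eval3_evalG: "eval3 f P = evalG id P f"
  by (simp add: eval3_def evalG_def monG_def)

lemma monG_add: "monG P (\<mu> + \<nu>) = monG P \<mu> * monG P \<nu>"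
  by (simp add: monG_def lookup_add power_add prod.distrib)

lemma monG_zero[simp]: "monG P 0 = 1"
  by (simp add: monG_def)

lemma poly_sum_singles:
  "f = (\<Sum>\<mu>\<in>Poly_Mapping.keys f. Poly_Mapping.single \<mu> (Poly_Mapping.lookup f \<mu>))"
proof (rule poly_mapping_eqI)
  fix k
  have "Poly_Mapping.lookup (\<Sum>\<mu>\<in>Poly_Mapping.keys f. Poly_Mapping.single \<mu> (Poly_Mapping.lookup f \<mu>)) k
      = (\<Sum>\<mu>\<in>Poly_Mapping.keys f. (if \<mu> = k then Poly_Mapping.lookup f \<mu> else 0))"
    by (simp add: lookup_sum lookup_single when_def)
  also have "\<dots> = Poly_Mapping.lookup f k"
    by (simp add: in_keys_iff)
  finally show "Poly_Mapping.lookup f k = Poly_Mapping.lookup (\<Sum>\<mu>\<in>Poly_Mapping.keys f. Poly_Mapping.single \<mu> (Poly_Mapping.lookup f \<mu>)) k" by simp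
qed

context
  fixes h :: "'a::comm_ring_1 \<Rightarrow> 'b::comm_ring_1"
  assumes h0: "h 0 = 0" and hadd: "\<And>a b. h (a + b) = h a + h b"
    and hmult: "\<And>a b. h (a * b) = h a * h b" and h1: "h 1 = 1"
begin

lemma evalG_superset:
  assumes "finite S" "Poly_Mapping.keys f \<subseteq> S"
  shows "evalG h P f = (\<Sum>\<mu>\<in>S. h (Poly_Mapping.lookup f \<mu>) * monG P \<mu>)"
  unfolding evalG_def
  by (rule sum.mono_neutral_left) (use assms h0 in \<open>auto simp: in_keys_iff\<close>)

lemma evalG_add: "evalG h P (f + g) = evalG h P f + evalG h P g"
proof -
  let ?S = "Poly_Mapping.keys f \<union> Poly_Mapping.keys g"
  have "evalG h P (f + g) = (\<Sum>\<mu>\<in>?S. h (Poly_Mapping.lookup (f+g) \<mu>) * monG P \<mu>)"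
    by (rule evalG_superset) (auto simp: keys_add)
  also have "\<dots> = (\<Sum>\<mu>\<in>?S. h (Poly_Mapping.lookup f \<mu>) * monG P \<mu>) + (\<Sum>\<mu>\<in>?S. h (Poly_Mapping.lookup g \<mu>) * monG P \<mu>)"
    by (simp add: lookup_add hadd distrib_right sum.distrib)
  also have "\<dots> = evalG h P f + evalG h P g"
    by (subst (1 2) evalG_superset[symmetric]) auto
  finally show ?thesis .
qed

lemma evalG_zero[simp]: "evalG h P 0 = 0"
  by (simp add: evalG_def)

lemma evalG_sum: "evalG h P (sum F A) = (\<Sum>x\<in>A. evalG h P (F x))"
  by (induction A rule: infinite_finite_induct) (auto simp: evalG_add)

lemma evalG_single: "evalG h P (Poly_Mapping.single \<mu> c) = h c * monG P \<mu>"
  by (subst evalG_superset[of "{\<mu>}"]) auto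

lemma evalG_mult: "evalG h P (f * g) = evalG h P f * evalG h P g"
proof -
  let ?F = "Poly_Mapping.keys f" and ?G = "Poly_Mapping.keys g"
  have "f * g = (\<Sum>\<mu>\<in>?F. Poly_Mapping.single \<mu> (Poly_Mapping.lookup f \<mu>)) * (\<Sum>\<nu>\<in>?G. Poly_Mapping.single \<nu> (Poly_Mapping.lookup g \<nu>))"
    by (subst (1) poly_sum_singles, subst (1) poly_sum_singles[of g]) (rule refl)
  also have "\<dots> = (\<Sum>\<mu>\<in>?F. \<Sum>\<nu>\<in>?G. Poly_Mapping.single (\<mu>+\<nu>) (Poly_Mapping.lookup f \<mu> * Poly_Mapping.lookup g \<nu>))"
    by (simp add: sum_distrib_left sum_distrib_right mult_single) (rule sum.swap)
  finally have fg: "f * g = \<dots>" .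
  have "evalG h P (f * g) = (\<Sum>\<mu>\<in>?F. \<Sum>\<nu>\<in>?G. (h (Poly_Mapping.lookup f \<mu>) * monG P \<mu>) * (h (Poly_Mapping.lookup g \<nu>) * monG P \<nu>))"
    unfolding fg by (simp add: evalG_sum evalG_single hmult monG_add algebra_simps)
  also have "\<dots> = evalG h P f * evalG h P g"
    by (simp add: evalG_def sum_distrib_left sum_distrib_right) (rule sum.swap)
  finally show ?thesis .
qed

lemma evalG_one[simp]: "evalG h P 1 = 1"
  using evalG_single[where \<mu>=0 and c=1] h1 by simp

lemma evalG_power: "evalG h P (f ^ n) = evalG h P f ^ n"
  by (induction n) (auto simp: evalG_mult)

lemma evalG_prod_mset: "evalG h P (prod_mset M) = prod_mset (image_mset (evalG h P) M)"
  by (induction M) (auto simp: evalG_mult)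

lemma evalG_neg: "evalG h P (- f) = - evalG h P f"
  using evalG_add[where f=f and g="-f" and P=P] by (simp add: eq_neg_iff_add_eq_0 add.commute)

lemma evalG_diff: "evalG h P (f - g) = evalG h P f - evalG h P g"
  using evalG_add[where f=f and g="-g"] evalG_neg[where f=g] by simp

end

lemma id_hom: "id (0::'a::comm_ring_1) = 0" "\<And>a b::'a. id (a + b) = id a + id b"
    "\<And>a b::'a. id (a * b) = id a * id b" "id (1::'a) = 1" by auto

lemmas eval3_add = evalG_add[OF id_hom, folded eval3_evalG]
lemmas eval3_mult = evalG_mult[OF id_hom, folded eval3_evalG]
lemmas eval3_sum = evalG_sum[OF id_hom, folded eval3_evalG]
lemmas eval3_single = evalG_single[OF id_hom, folded eval3_evalG]
lemmas eval3_power = evalG_power[OF id_hom, folded eval3_evalG]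
lemmas eval3_prod_mset = evalG_prod_mset[OF id_hom, folded eval3_evalG]
lemmas eval3_diff = evalG_diff[OF id_hom, folded eval3_evalG]




section \<open>Ideals\<close>

lemma ig_zero[simp]: "0 \<in> ideal_gen S"
  unfolding ideal_gen_def by (rule CollectI, rule exI[of _ "{}"]) auto

lemma ig_base: "s \<in> S \<Longrightarrow> s \<in> ideal_gen S"
  unfolding ideal_gen_def by (rule CollectI, rule exI[of _ "{s}"], rule exI[of _ "\<lambda>_. 1"]) auto

lemma ig_add:
  assumes "x \<in> ideal_gen S" "y \<in> ideal_gen S"
  shows "x + y \<in> ideal_gen S"
proof -
  obtain F1 r1 where x: "x = (\<Sum>g\<in>F1. r1 g * g)" "finite F1" "F1 \<subseteq> S"
    using assms(1) unfolding ideal_gen_def by blast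
  obtain F2 r2 where y: "y = (\<Sum>g\<in>F2. r2 g * g)" "finite F2" "F2 \<subseteq> S"
    using assms(2) unfolding ideal_gen_def by blast
  define r where "r g = (if g \<in> F1 then r1 g else 0) + (if g \<in> F2 then r2 g else 0)" for g
  have "(\<Sum>g\<in>F1 \<union> F2. r g * g) = (\<Sum>g\<in>F1 \<union> F2. (if g \<in> F1 then r1 g * g else 0) + (if g \<in> F2 then r2 g * g else 0))"
    by (rule sum.cong) (auto simp: r_def distrib_right)
  also have "\<dots> = (\<Sum>g\<in>F1 \<union> F2. (if g \<in> F1 then r1 g * g else 0)) + (\<Sum>g\<in>F1 \<union> F2. (if g \<in> F2 then r2 g * g else 0))"
    by (rule sum.distrib)
  also have "(\<Sum>g\<in>F1 \<union> F2. (if g \<in> F1 then r1 g * g else 0)) = (\<Sum>g\<in>{g\<in>F1 \<union> F2. g \<in> F1}. r1 g * g)"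
    by (rule sum.inter_filter[symmetric]) (use x y in auto)
  also have "{g\<in>F1 \<union> F2. g \<in> F1} = F1" by auto
  also have "(\<Sum>g\<in>F1. r1 g * g) = x" using x by simp
  also have "(\<Sum>g\<in>F1 \<union> F2. (if g \<in> F2 then r2 g * g else 0)) = (\<Sum>g\<in>{g\<in>F1 \<union> F2. g \<in> F2}. r2 g * g)"
    by (rule sum.inter_filter[symmetric]) (use x y in auto)
  also have "{g\<in>F1 \<union> F2. g \<in> F2} = F2" by auto
  also have "(\<Sum>g\<in>F2. r2 g * g) = y" using y by simp
  finally show ?thesis unfolding ideal_gen_def using x y
    by (intro CollectI exI[of _ "F1 \<union> F2"] exI[of _ r]) auto
qed

lemma ig_mult: "x \<in> ideal_gen S \<Longrightarrow> r * x \<in> ideal_gen S"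
proof -
  assume "x \<in> ideal_gen S"
  then obtain F r1 where x: "x = (\<Sum>g\<in>F. r1 g * g)" "finite F" "F \<subseteq> S"
    unfolding ideal_gen_def by blast
  have "r * x = (\<Sum>g\<in>F. (r * r1 g) * g)" by (simp add: x sum_distrib_left mult.assoc)
  then show ?thesis unfolding ideal_gen_def using x
    by (intro CollectI exI[of _ F] exI[of _ "\<lambda>g. r * r1 g"]) auto
qed

lemma ig_mult_right: "x \<in> ideal_gen S \<Longrightarrow> x * r \<in> ideal_gen S"
  using ig_mult[of x S r] by (simp add: mult.commute)

lemma ig_neg: "x \<in> ideal_gen S \<Longrightarrow> - x \<in> ideal_gen S"
  using ig_mult[of x S "-1"] by simp

lemma ig_diff: "x \<in> ideal_gen S \<Longrightarrow> y \<in> ideal_gen S \<Longrightarrow> x - y \<in> ideal_gen S"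
  using ig_add[of x S "-y"] ig_neg[of y S] by simp

lemma ig_sum: "(\<And>i. i \<in> A \<Longrightarrow> f i \<in> ideal_gen S) \<Longrightarrow> sum f A \<in> ideal_gen S"
  by (induction A rule: infinite_finite_induct) (auto intro: ig_add)

lemma ig_sub:
  assumes "S \<subseteq> ideal_gen T" shows "ideal_gen S \<subseteq> ideal_gen T"
proof
  fix x assume "x \<in> ideal_gen S"
  then obtain F r where x: "x = (\<Sum>g\<in>F. r g * g)" "finite F" "F \<subseteq> S"
    unfolding ideal_gen_def by blast
  show "x \<in> ideal_gen T" unfolding x(1)
    by (rule ig_sum, rule ig_mult) (use x assms in auto)
qed

lemma ig_mono: "S \<subseteq> T \<Longrightarrow> ideal_gen S \<subseteq> ideal_gen T"
  by (rule ig_sub) (auto intro: ig_base)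

lemma ig_prod:
  assumes "x \<in> ideal_gen S1" "y \<in> ideal_gen S2"
    and "\<And>a b. a \<in> S1 \<Longrightarrow> b \<in> S2 \<Longrightarrow> a * b \<in> ideal_gen T"
  shows "x * y \<in> ideal_gen T"
proof -
  obtain F1 r1 where x: "x = (\<Sum>g\<in>F1. r1 g * g)" "finite F1" "F1 \<subseteq> S1"
    using assms(1) unfolding ideal_gen_def by blast
  obtain F2 r2 where y: "y = (\<Sum>g\<in>F2. r2 g * g)" "finite F2" "F2 \<subseteq> S2"
    using assms(2) unfolding ideal_gen_def by blast
  have "x * y = (\<Sum>a\<in>F1. \<Sum>b\<in>F2. (r1 a * r2 b) * (a * b))"
    unfolding x y sum_product by (intro sum.cong refl) (simp add: mult_ac)
  also have "\<dots> \<in> ideal_gen T"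
    by (intro ig_sum) (rule ig_mult, use x y assms(3) in auto)
  finally show ?thesis .
qed

lemma rad_mult: "x \<in> radical (ideal_gen S) \<Longrightarrow> r * x \<in> radical (ideal_gen S)"
  unfolding radical_def by (auto simp: power_mult_distrib intro: ig_mult)

lemma rad_add:
  assumes "x \<in> radical (ideal_gen S)" "y \<in> radical (ideal_gen S)"
  shows "x + y \<in> radical (ideal_gen S)"
proof -
  obtain n where n: "x ^ n \<in> ideal_gen S" using assms(1) unfolding radical_def by blast
  obtain k where k: "y ^ k \<in> ideal_gen S" using assms(2) unfolding radical_def by blast
  have "(x + y) ^ (n + k) = (\<Sum>i\<le>n+k. of_nat (n + k choose i) * x ^ i * y ^ (n + k - i))"
    by (rule binomial_ring)
  also have "\<dots> \<in> ideal_gen S"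
  proof (rule ig_sum)
    fix i assume "i \<in> {..n+k}"
    show "of_nat (n + k choose i) * x ^ i * y ^ (n + k - i) \<in> ideal_gen S"
    proof (cases "n \<le> i")
      case True
      then have "x ^ i = x ^ n * x ^ (i - n)" by (simp add: power_add[symmetric])
      then show ?thesis using n by (simp add: ig_mult ig_mult_right mult.assoc)
    next
      case False
      then have "n + k - i = k + (n + k - i - k)" by simp
      then have "y ^ (n + k - i) = y ^ k * y ^ (n + k - i - k)" by (metis power_add)
      then show ?thesis using k by (simp add: ig_mult ig_mult_right mult.assoc)
    qed
  qed
  finally show ?thesis unfolding radical_def by blast
qed

lemma rad_zero: "0 \<in> radical (ideal_gen S)"
  unfolding radical_def by (auto intro!: exI[of _ 1])

lemma rad_sum: "(\<And>i. i \<in> A \<Longrightarrow> f i \<in> radical (ideal_gen S)) \<Longrightarrow> sum f A \<in> radical (ideal_gen S)"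
  by (induction A rule: infinite_finite_induct) (auto intro: rad_add rad_zero)

lemma rad_ig: "ideal_gen T \<subseteq> radical (ideal_gen S) \<Longrightarrow> x \<in> ideal_gen T \<Longrightarrow> x \<in> radical (ideal_gen S)"
  by blast

lemma rad_ig_sub:
  assumes "T \<subseteq> radical (ideal_gen S)" shows "ideal_gen T \<subseteq> radical (ideal_gen S)"
proof
  fix x assume "x \<in> ideal_gen T"
  then obtain F r where x: "x = (\<Sum>g\<in>F. r g * g)" "finite F" "F \<subseteq> T"
    unfolding ideal_gen_def by blast
  show "x \<in> radical (ideal_gen S)" unfolding x(1)
    by (rule rad_sum, rule rad_mult) (use x assms in auto)
qed

section \<open>The main induction\<close>

definition Gens :: "nat \<Rightarrow> 'a::comm_ring_1 multiset \<Rightarrow> 'a set" where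
  "Gens a \<Lambda> = {prod_mset M | M. M \<subseteq># \<Lambda> \<and> size M = a}"

lemma I_a_Gens: "I_a a \<Lambda> = ideal_gen (Gens a \<Lambda> \<union> {})"
  by (simp add: I_a_def Gens_def)

lemma subset_add_mset_helper: "M \<subseteq># L \<Longrightarrow> M \<subseteq># add_mset x L"
  by (metis add_mset_add_single mset_subset_eq_add_left subset_mset.order_trans)

lemma IND:
  fixes f :: "'a::comm_ring_1"
  assumes "\<And>T. M \<subseteq> T \<Longrightarrow> size (filter_mset (\<lambda>l. l \<notin> ideal_gen T) \<Lambda>) < a \<Longrightarrow> f \<in> ideal_gen T"
  shows "f \<in> radical (ideal_gen (Gens a \<Lambda> \<union> M))"
  using assms
proof (induction \<Lambda> arbitrary: a M)
  case empty
  show ?case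
  proof (cases a)
    case 0
    have "prod_mset {#} \<in> Gens a {#}" unfolding Gens_def 0 by blast
    then have "f ^ 0 \<in> ideal_gen (Gens a {#} \<union> M)" by (auto intro: ig_base)
    then show ?thesis unfolding radical_def by blast
  next
    case (Suc b)
  have "f \<in> ideal_gen M" using empty[of M] Suc by auto
  then have "f ^ 1 \<in> ideal_gen (Gens a {#} \<union> M)" using ig_mono[of M "Gens a {#} \<union> M"] by auto
  then show ?thesis unfolding radical_def by blast
  qed
next
  case (add l0 \<Lambda> a M)
  show ?case
  proof (cases a)
    case 0
    have "prod_mset {#} \<in> Gens a (add_mset l0 \<Lambda>)" unfolding Gens_def 0
      by (rule CollectI, rule exI[of _ "{#}"]) simp
    then have "f ^ 0 \<in> ideal_gen (Gens a (add_mset l0 \<Lambda>) \<union> M)" by (auto intro: ig_base)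
    then show ?thesis unfolding radical_def by blast
  next
    case (Suc b)
    have r1: "f \<in> radical (ideal_gen (Gens a \<Lambda> \<union> (M \<union> {l0})))"
    proof (rule add.IH)
      fix T assume T: "M \<union> {l0} \<subseteq> T" "size (filter_mset (\<lambda>l. l \<notin> ideal_gen T) \<Lambda>) < a"
      have "l0 \<in> ideal_gen T" using T(1) by (auto intro: ig_base)
      then show "f \<in> ideal_gen T" using T by (intro add.prems) auto
    qed
    have r2: "f \<in> radical (ideal_gen (Gens b \<Lambda> \<union> M))"
    proof (rule add.IH)
      fix T assume T: "M \<subseteq> T" "size (filter_mset (\<lambda>l. l \<notin> ideal_gen T) \<Lambda>) < b"
      have "size (filter_mset (\<lambda>l. l \<notin> ideal_gen T) (add_mset l0 \<Lambda>)) < a"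
        using T(2) Suc by auto
      then show "f \<in> ideal_gen T" using T by (intro add.prems) auto
    qed
    obtain i where i: "f ^ i \<in> ideal_gen (Gens a \<Lambda> \<union> (M \<union> {l0}))" using r1 unfolding radical_def by blast
    obtain j where j: "f ^ j \<in> ideal_gen (Gens b \<Lambda> \<union> M)" using r2 unfolding radical_def by blast
    have "f ^ i * f ^ j \<in> ideal_gen (Gens a (add_mset l0 \<Lambda>) \<union> M)"
    proof (rule ig_prod[OF i j])
      fix x y assume x: "x \<in> Gens a \<Lambda> \<union> (M \<union> {l0})" and y: "y \<in> Gens b \<Lambda> \<union> M"
      let ?T = "Gens a (add_mset l0 \<Lambda>) \<union> M"
      have sub: "Gens a \<Lambda> \<subseteq> Gens a (add_mset l0 \<Lambda>)"
        unfolding Gens_def by (fastforce intro: subset_add_mset_helper)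
      consider "x \<in> Gens a \<Lambda>" | "x \<in> M" | "x = l0" using x by blast
      then show "x * y \<in> ideal_gen ?T"
      proof cases
        case 1 then have "x \<in> ideal_gen ?T" using sub by (auto intro: ig_base)
        then show ?thesis by (rule ig_mult_right)
      next
        case 2 then have "x \<in> ideal_gen ?T" by (auto intro: ig_base)
        then show ?thesis by (rule ig_mult_right)
      next
        case 3
        show ?thesis
        proof (cases "y \<in> M")
          case True then have "y \<in> ideal_gen ?T" by (auto intro: ig_base)
          then show ?thesis by (rule ig_mult)
        next
          case False
          then obtain N where N: "y = prod_mset N" "N \<subseteq># \<Lambda>" "size N = b"
            using y unfolding Gens_def by blast
          have "x * y = prod_mset (add_mset l0 N)" using 3 N by simp
          moreover have "add_mset l0 N \<subseteq># add_mset l0 \<Lambda>" using N by simp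
          ultimately have "x * y \<in> Gens a (add_mset l0 \<Lambda>)"
            unfolding Gens_def using N Suc by fastforce
          then show ?thesis by (auto intro: ig_base)
        qed
      qed
    qed
    then have "f ^ (i + j) \<in> ideal_gen (Gens a (add_mset l0 \<Lambda>) \<union> M)" by (simp add: power_add)
    then show ?thesis unfolding radical_def by blast
  qed
qed




declare One_nat_def[simp del]

lemma sum_UNIV_var: "(\<Sum>v\<in>UNIV. f v) = f VX + f VY + f VZ"
  by (simp add: UNIV_var add.assoc)

lemma prod_UNIV_var: "(\<Prod>v\<in>UNIV. f v) = f VX * f VY * f VZ"
  by (simp add: UNIV_var mult.assoc)

abbreviation Xv :: "var \<Rightarrow> 'a::comm_ring_1 mpoly3" where
  "Xv v \<equiv> Poly_Mapping.single (Poly_Mapping.single v 1) 1"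

definition cst :: "'a::comm_ring_1 \<Rightarrow> 'a mpoly3" where
  "cst c = Poly_Mapping.single 0 c"

definition lf :: "(var \<Rightarrow> 'a::comm_ring_1) \<Rightarrow> 'a mpoly3" where
  "lf c = (\<Sum>v\<in>UNIV. Poly_Mapping.single (Poly_Mapping.single v 1) (c v))"

definition dot :: "(var \<Rightarrow> 'a::comm_ring_1) \<Rightarrow> (var \<Rightarrow> 'a) \<Rightarrow> 'a" where
  "dot a P = (\<Sum>v\<in>UNIV. a v * P v)"

definition coef :: "'a::comm_ring_1 mpoly3 \<Rightarrow> var \<Rightarrow> 'a" where
  "coef l v = Poly_Mapping.lookup l (Poly_Mapping.single v 1)"

lemma cst_mult: "cst a * cst b = cst (a * b)" by (simp add: cst_def mult_single)
lemma cst_one[simp]: "cst 1 = 1" by (simp add: cst_def)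
lemma cst_zero[simp]: "cst 0 = 0" by (simp add: cst_def)
lemma cst_power: "cst a ^ n = cst (a ^ n)" by (induction n) (auto simp: cst_mult)
lemma cst_add: "cst (a + b) = cst a + cst b" by (simp add: cst_def single_add)
lemma cst_sum: "cst (sum f A) = (\<Sum>x\<in>A. cst (f x))"
  by (induction A rule: infinite_finite_induct) (auto simp: cst_add)
lemma cst_single: "cst a * Poly_Mapping.single \<mu> b = Poly_Mapping.single \<mu> (a * b)"
  by (simp add: cst_def mult_single)

lemma single_var_eq: "(Poly_Mapping.single v (1::nat) = Poly_Mapping.single w 1) \<longleftrightarrow> v = w"
proof
  assume "Poly_Mapping.single v (1::nat) = Poly_Mapping.single w 1"
  then have "Poly_Mapping.lookup (Poly_Mapping.single v (1::nat)) v = Poly_Mapping.lookup (Poly_Mapping.single w 1) v" by simp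
  then show "v = w" by (auto simp: lookup_single when_def split: if_splits)
qed simp

lemma mdeg_single: "mdeg (Poly_Mapping.single v 1) = 1"
  by (simp add: mdeg_def lookup_single when_def)

lemma mdeg_add: "mdeg (\<mu> + \<nu>) = mdeg \<mu> + mdeg \<nu>"
  by (simp add: mdeg_def lookup_add sum.distrib)

lemma mdeg_one_iff:
  assumes "mdeg \<mu> = 1" shows "\<exists>v. \<mu> = Poly_Mapping.single v 1"
proof -
  let ?l = "Poly_Mapping.lookup \<mu>"
  have s: "?l VX + ?l VY + ?l VZ = 1" using assms by (simp add: mdeg_def sum_UNIV_var)
  have e: "\<mu> = Poly_Mapping.single v 1" if "?l v = 1" "\<forall>w. w \<noteq> v \<longrightarrow> ?l w = 0" for v
    by (rule poly_mapping_eqI) (use that in \<open>auto simp: lookup_single when_def\<close>)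
  have "?l VX = 1 \<and> ?l VY = 0 \<and> ?l VZ = 0 \<or> ?l VX = 0 \<and> ?l VY = 1 \<and> ?l VZ = 0 \<or> ?l VX = 0 \<and> ?l VY = 0 \<and> ?l VZ = 1"
    using s by arith
  moreover have "\<forall>w. w \<noteq> v \<longrightarrow> ?l w = 0" if "?l v = 1" for v
  proof (intro allI impI)
    fix w assume "w \<noteq> v"
    show "?l w = 0" using s that \<open>w \<noteq> v\<close> by (cases v; cases w) auto
  qed
  ultimately show ?thesis using e by blast
qed

lemma monG_single_var: "monG P (Poly_Mapping.single v 1) = P v"
  by (cases v) (simp_all add: monG_def prod_UNIV_var lookup_single when_def)

lemma eval3_single': "eval3 (Poly_Mapping.single \<mu> (c::'a::comm_ring_1)) P = c * monG P \<mu>"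
  using eval3_single by simp

lemma eval3_cst: "eval3 (cst (c::'a::comm_ring_1)) P = c"
  by (simp add: cst_def eval3_single')

lemma eval3_lf: "eval3 (lf c) P = dot c P"
  by (simp add: lf_def eval3_sum eval3_single' monG_single_var dot_def)

lemma lookup_lf: "Poly_Mapping.lookup (lf c) (Poly_Mapping.single v 1) = c v"
  by (cases v) (simp_all add: lf_def lookup_sum sum_UNIV_var lookup_add lookup_single when_def single_var_eq)

lemma lookup_lf_other: "(\<forall>v. \<mu> \<noteq> Poly_Mapping.single v 1) \<Longrightarrow> Poly_Mapping.lookup (lf c) \<mu> = 0"
  by (auto simp: lf_def lookup_sum lookup_single when_def intro!: sum.neutral)

lemma coef_lf[simp]: "coef (lf c) = c"
  by (simp add: coef_def lookup_lf fun_eq_iff)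

lemma lf_coef:
  assumes "linear_form l" shows "lf (coef l) = l"
proof (rule poly_mapping_eqI)
  fix \<mu>
  show "Poly_Mapping.lookup (lf (coef l)) \<mu> = Poly_Mapping.lookup l \<mu>"
  proof (cases "\<exists>v. \<mu> = Poly_Mapping.single v 1")
    case True then show ?thesis by (auto simp: lookup_lf coef_def)
  next
    case False
    then have "\<mu> \<notin> Poly_Mapping.keys l" using assms mdeg_one_iff unfolding linear_form_def by blast
    then show ?thesis using False by (simp add: lookup_lf_other in_keys_iff)
  qed
qed

lemma lf_zero_iff: "lf c = 0 \<longleftrightarrow> c = (\<lambda>_. 0)"
proof
  assume "lf c = 0" then show "c = (\<lambda>_. 0)" using coef_lf[of c] by (auto simp: coef_def fun_eq_iff)
qed (simp add: lf_def)

lemma linear_form_lf: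
  assumes "c \<noteq> (\<lambda>_. 0)" shows "linear_form (lf c)"
  unfolding linear_form_def
proof
  show "lf c \<noteq> 0" using assms lf_zero_iff by blast
  show "\<forall>\<mu>\<in>Poly_Mapping.keys (lf c). mdeg \<mu> = 1"
  proof
    fix \<mu> assume "\<mu> \<in> Poly_Mapping.keys (lf c)"
    then have "\<exists>v. \<mu> = Poly_Mapping.single v 1" using lookup_lf_other[of \<mu> c] by (auto simp: in_keys_iff)
    then show "mdeg \<mu> = 1" using mdeg_single by auto
  qed
qed

lemma coef_nonzero: "linear_form l \<Longrightarrow> coef l \<noteq> (\<lambda>_. 0)"
  using lf_coef[of l] lf_zero_iff[of "coef l"] unfolding linear_form_def by auto

lemma eval3_linear: "linear_form l \<Longrightarrow> eval3 l P = dot (coef l) P"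
  using lf_coef eval3_lf by metis

lemma lf_lin: "lf (\<lambda>v. \<alpha> * a v + \<beta> * b v) = cst \<alpha> * lf a + cst \<beta> * lf b"
  by (simp add: lf_def sum_UNIV_var cst_single single_add algebra_simps)

lemma lf_lin3: "lf (\<lambda>v. \<alpha> * a v + \<beta> * b v + \<gamma> * c v) = cst \<alpha> * lf a + cst \<beta> * lf b + cst \<gamma> * lf c"
  by (simp add: lf_def sum_UNIV_var cst_single single_add algebra_simps)

lemma lookup_map_mult: "Poly_Mapping.lookup (Poly_Mapping.map (\<lambda>a. (c::'a::comm_ring_1) * a) f) k = c * Poly_Mapping.lookup f k"
  by (simp add: map.rep_eq when_def)

lemma eval3_map: "eval3 (Poly_Mapping.map (\<lambda>a. (c::'a::comm_ring_1) * a) l) P = c * eval3 l P"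
proof -
  have "Poly_Mapping.map (\<lambda>a. c * a) l = cst c * l"
    using mult_map_scale_conv_mult[of c l] by (simp add: cst_def)
  then show ?thesis by (simp add: eval3_mult eval3_cst)
qed

lemma same_line_coef:
  assumes "same_line l l'" shows "\<exists>k. k \<noteq> 0 \<and> (\<forall>v. coef l' v = k * coef l v)"
  using assms unfolding same_line_def coef_def by (auto simp: lookup_map_mult)

lemma coef_same_line:
  assumes "linear_form l" "linear_form l'" "k \<noteq> 0" "\<forall>v. coef l' v = k * coef l v"
  shows "same_line l l'"
proof -
  have "Poly_Mapping.map (\<lambda>a. k * a) l = l'"
  proof (rule poly_mapping_eqI)
    fix \<mu>
    show "Poly_Mapping.lookup (Poly_Mapping.map (\<lambda>a. k * a) l) \<mu> = Poly_Mapping.lookup l' \<mu>"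
    proof (cases "\<exists>v. \<mu> = Poly_Mapping.single v 1")
      case True then show ?thesis using assms(4) by (auto simp: lookup_map_mult coef_def)
    next
      case False
      then have "\<mu> \<notin> Poly_Mapping.keys l" "\<mu> \<notin> Poly_Mapping.keys l'"
        using assms(1,2) mdeg_one_iff unfolding linear_form_def by blast+
      then show ?thesis by (simp add: lookup_map_mult in_keys_iff)
    qed
  qed
  then show ?thesis unfolding same_line_def using assms(3) by blast
qed

lemma same_line_refl: "same_line l l"
  unfolding same_line_def by (rule exI[of _ 1]) (simp add: poly_mapping_eqI lookup_map_mult)




declare One_nat_def[simp del]

section \<open>Vectors in K^3\<close>

definition cross :: "(var \<Rightarrow> 'a::comm_ring_1) \<Rightarrow> (var \<Rightarrow> 'a) \<Rightarrow> (var \<Rightarrow> 'a)" where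
  "cross a b = (\<lambda>v. case v of VX \<Rightarrow> a VY * b VZ - a VZ * b VY
                          | VY \<Rightarrow> a VZ * b VX - a VX * b VZ
                          | VZ \<Rightarrow> a VX * b VY - a VY * b VX)"

lemma dot3: "dot a P = a VX * P VX + a VY * P VY + a VZ * P VZ"
  by (simp add: dot_def sum_UNIV_var)

lemma cross_simps[simp]:
  "cross a b VX = a VY * b VZ - a VZ * b VY"
  "cross a b VY = a VZ * b VX - a VX * b VZ"
  "cross a b VZ = a VX * b VY - a VY * b VX"
  by (simp_all add: cross_def)

lemma fun3_eq: "(f = g) \<longleftrightarrow> f VX = g VX \<and> f VY = g VY \<and> f VZ = g VZ"
  by (metis (full_types) ext var.exhaust)

lemma fun3_zero: "(f = (\<lambda>_. 0)) \<longleftrightarrow> f VX = 0 \<and> f VY = 0 \<and> f VZ = 0"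
  by (simp add: fun3_eq)

lemma dot_cross1: "dot a (cross a b) = 0"
  by (simp add: dot3 algebra_simps)

lemma dot_cross2: "dot b (cross a b) = 0"
  by (simp add: dot3 algebra_simps)

lemma dot_comm: "dot a b = dot b a"
  by (simp add: dot3 algebra_simps)

lemma cross_cross: "cross c (cross P Q) = (\<lambda>v. P v * dot c Q - Q v * dot c P)"
  by (simp add: fun3_eq dot3 algebra_simps)

lemma cross_anti: "cross a b = (\<lambda>_. 0) \<longleftrightarrow> cross b a = (\<lambda>_. 0)"
  by (simp add: fun3_zero algebra_simps) (auto simp: algebra_simps)

lemma cramer:
  "dot c (cross a b) * e v = dot c (cross e b) * a v + dot c (cross a e) * b v + dot e (cross a b) * c v"
  by (cases v) (simp_all add: dot3 algebra_simps)

lemma cross_zero_prop: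
  fixes a b :: "var \<Rightarrow> 'a::field"
  assumes "cross a b = (\<lambda>_. 0)" "a \<noteq> (\<lambda>_. 0)"
  shows "\<exists>k. \<forall>v. b v = k * a v"
proof -
  have c: "a VY * b VZ = a VZ * b VY" "a VZ * b VX = a VX * b VZ" "a VX * b VY = a VY * b VX"
    using assms(1) by (simp_all add: fun3_zero)
  consider "a VX \<noteq> 0" | "a VY \<noteq> 0" | "a VZ \<noteq> 0" using assms(2) by (auto simp: fun3_zero)
  then show ?thesis
  proof cases
    case 1
    show ?thesis
      by (rule exI[of _ "b VX / a VX"], rule allI, case_tac v) (use 1 c in \<open>simp_all add: field_simps\<close>)
  next
    case 2
    show ?thesis
      by (rule exI[of _ "b VY / a VY"], rule allI, case_tac v) (use 2 c in \<open>simp_all add: field_simps\<close>)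
  next
    case 3
    show ?thesis
      by (rule exI[of _ "b VZ / a VZ"], rule allI, case_tac v) (use 3 c in \<open>simp_all add: field_simps\<close>)
  qed
qed

lemma prop_cross_zero: "(\<forall>v. b v = k * a v) \<Longrightarrow> cross a b = (\<lambda>_. 0)"
  by (simp add: fun3_zero algebra_simps)

lemma two_points_prop:
  fixes a b P Q :: "var \<Rightarrow> 'a::field"
  assumes n: "cross P Q \<noteq> (\<lambda>_. 0)" and "dot a P = 0" "dot a Q = 0" "dot b P = 0" "dot b Q = 0"
    and a: "a \<noteq> (\<lambda>_. 0)"
  shows "\<exists>k. \<forall>v. b v = k * a v"
proof -
  have "cross a (cross P Q) = (\<lambda>_. 0)" "cross b (cross P Q) = (\<lambda>_. 0)"
    using assms by (simp_all add: cross_cross)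
  then have "cross (cross P Q) a = (\<lambda>_. 0)" "cross (cross P Q) b = (\<lambda>_. 0)"
    using cross_anti by blast+
  then obtain \<alpha> \<beta> where al: "\<forall>v. a v = \<alpha> * cross P Q v" and be: "\<forall>v. b v = \<beta> * cross P Q v"
    using cross_zero_prop[OF _ n] by metis
  have "\<alpha> \<noteq> 0" using a al by auto
  then have "\<forall>v. b v = (\<beta> / \<alpha>) * a v" using al be by auto
  then show ?thesis by blast
qed

lemma Xv_power: "(Xv v :: 'a::comm_ring_1 mpoly3) ^ n = Poly_Mapping.single (Poly_Mapping.single v n) 1"
  by (induction n) (simp_all add: mult_single single_add[symmetric] One_nat_def)

lemma single_mon:
  "(Poly_Mapping.single \<mu> 1 :: 'a::comm_ring_1 mpoly3) =
    Xv VX ^ Poly_Mapping.lookup \<mu> VX * Xv VY ^ Poly_Mapping.lookup \<mu> VY * Xv VZ ^ Poly_Mapping.lookup \<mu> VZ"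
proof -
  have "\<mu> = Poly_Mapping.single VX (Poly_Mapping.lookup \<mu> VX) + Poly_Mapping.single VY (Poly_Mapping.lookup \<mu> VY)
          + Poly_Mapping.single VZ (Poly_Mapping.lookup \<mu> VZ)"
    by (rule poly_mapping_eqI, case_tac k) (simp_all add: lookup_add lookup_single when_def)
  then show ?thesis
    by (simp add: Xv_power mult_single)
qed

lemma cg_mult:
  assumes "a - b \<in> ideal_gen T" "c - d \<in> ideal_gen T"
  shows "a * c - b * d \<in> ideal_gen T"
proof -
  have "a * c - b * d = a * (c - d) + (a - b) * d" by (simp add: algebra_simps)
  then show ?thesis using assms by (simp add: ig_add ig_mult ig_mult_right)
qed

lemma cg_pow:
  assumes "a - b \<in> ideal_gen T" shows "a ^ n - b ^ n \<in> ideal_gen T"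
  by (induction n) (simp_all add: cg_mult assms)

lemma HOM:
  fixes g :: "'a::field mpoly3"
  assumes Pv: "P v \<noteq> 0" and hom: "\<forall>\<mu>\<in>Poly_Mapping.keys g. mdeg \<mu> = d" and ev: "eval3 g P = 0"
    and lin: "\<forall>w. cst (P v) * Xv w - cst (P w) * Xv v \<in> ideal_gen T"
  shows "g \<in> ideal_gen T"
proof -
  define a where "a w = cst (P v) * Xv w" for w
  define b where "b w = cst (P w) * (Xv v :: 'a mpoly3)" for w
  have ab: "a w - b w \<in> ideal_gen T" for w using lin by (simp add: a_def b_def)
  have mon: "cst (P v ^ d) * Poly_Mapping.single \<mu> 1 - cst (monG P \<mu>) * Xv v ^ d \<in> ideal_gen T"
    if md: "mdeg \<mu> = d" for \<mu>
  proof -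
    let ?x = "Poly_Mapping.lookup \<mu> VX" and ?y = "Poly_Mapping.lookup \<mu> VY" and ?z = "Poly_Mapping.lookup \<mu> VZ"
    have d: "d = ?x + ?y + ?z" using md by (simp add: mdeg_def sum_UNIV_var)
    have c1: "cst (P v ^ d) = cst (P v) ^ ?x * cst (P v) ^ ?y * cst (P v) ^ ?z"
      by (simp only: d power_add cst_power cst_mult)
    have e1: "cst (P v ^ d) * Poly_Mapping.single \<mu> 1 = a VX ^ ?x * a VY ^ ?y * a VZ ^ ?z"
      unfolding c1 a_def power_mult_distrib single_mon[of \<mu>] by (simp only: mult_ac)
    have c2: "cst (monG P \<mu>) = cst (P VX) ^ ?x * cst (P VY) ^ ?y * cst (P VZ) ^ ?z"
      by (simp only: monG_def prod_UNIV_var cst_power cst_mult)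
    have c3: "(Xv v :: 'a mpoly3) ^ d = Xv v ^ ?x * Xv v ^ ?y * Xv v ^ ?z"
      by (simp only: d power_add)
    have e2: "cst (monG P \<mu>) * Xv v ^ d = b VX ^ ?x * b VY ^ ?y * b VZ ^ ?z"
      unfolding c2 c3 b_def power_mult_distrib by (simp only: mult_ac)
    show ?thesis unfolding e1 e2 by (intro cg_mult cg_pow ab)
  qed
  have gs: "g = (\<Sum>\<mu>\<in>Poly_Mapping.keys g. cst (Poly_Mapping.lookup g \<mu>) * Poly_Mapping.single \<mu> 1)"
    by (subst poly_sum_singles) (simp add: cst_single)
  have evs: "eval3 g P = (\<Sum>\<mu>\<in>Poly_Mapping.keys g. Poly_Mapping.lookup g \<mu> * monG P \<mu>)"
    by (simp add: eval3_evalG evalG_def)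
  have "cst (P v ^ d) * g - cst (eval3 g P) * Xv v ^ d =
     (\<Sum>\<mu>\<in>Poly_Mapping.keys g. cst (Poly_Mapping.lookup g \<mu>) *
        (cst (P v ^ d) * Poly_Mapping.single \<mu> 1 - cst (monG P \<mu>) * Xv v ^ d))"
    apply (subst (1) gs)
    apply (simp add: evs cst_sum sum_distrib_left sum_distrib_right sum_subtractf[symmetric] cst_mult[symmetric])
    apply (simp add: algebra_simps)
    done
  also have "\<dots> \<in> ideal_gen T"
    by (intro ig_sum, rule ig_mult, rule mon) (use hom in auto)
  finally have "cst (P v ^ d) * g \<in> ideal_gen T" using ev by simp
  then have "cst (inverse (P v ^ d)) * (cst (P v ^ d) * g) \<in> ideal_gen T" by (rule ig_mult)
  then show ?thesis using Pv by (simp add: mult.assoc[symmetric] cst_mult)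
qed




declare One_nat_def[simp del]

definition hc :: "nat \<Rightarrow> 'a::comm_ring_1 mpoly3 \<Rightarrow> 'a mpoly3" where
  "hc d f = Abs_poly_mapping (\<lambda>\<mu>. if mdeg \<mu> = d then Poly_Mapping.lookup f \<mu> else 0)"

lemma lookup_hc: "Poly_Mapping.lookup (hc d f) \<mu> = (if mdeg \<mu> = d then Poly_Mapping.lookup f \<mu> else 0)"
proof -
  have "finite {\<mu>. (if mdeg \<mu> = d then Poly_Mapping.lookup f \<mu> else 0) \<noteq> 0}"
    by (rule finite_subset[of _ "Poly_Mapping.keys f"]) (auto simp: in_keys_iff)
  then show ?thesis unfolding hc_def by simp
qed

lemma keys_hc: "Poly_Mapping.keys (hc d f) = {\<mu>\<in>Poly_Mapping.keys f. mdeg \<mu> = d}"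
  by (auto simp: in_keys_iff lookup_hc split: if_splits)

lemma hc_decomp: "f = (\<Sum>d\<in>mdeg ` Poly_Mapping.keys f. hc d f)"
proof (rule poly_mapping_eqI)
  fix \<mu>
  have "Poly_Mapping.lookup (\<Sum>d\<in>mdeg ` Poly_Mapping.keys f. hc d f) \<mu>
     = (\<Sum>d\<in>mdeg ` Poly_Mapping.keys f. if mdeg \<mu> = d then Poly_Mapping.lookup f \<mu> else 0)"
    by (simp add: lookup_sum lookup_hc)
  also have "\<dots> = Poly_Mapping.lookup f \<mu>"
    by (subst sum.delta') (auto simp: in_keys_iff)
  finally show "Poly_Mapping.lookup f \<mu> = Poly_Mapping.lookup (\<Sum>d\<in>mdeg ` Poly_Mapping.keys f. hc d f) \<mu>" by simp
qed

section \<open>Evaluation along the line through a point\<close>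

definition EP :: "(var \<Rightarrow> 'a::comm_ring_1) \<Rightarrow> 'a mpoly3 \<Rightarrow> 'a poly" where
  "EP P = evalG (\<lambda>c. [:c:]) (\<lambda>v. [:0, P v:])"

lemma pc_hom: "[:0::'a::comm_ring_1:] = 0" "\<And>a b::'a. [:a + b:] = [:a:] + [:b:]"
    "\<And>a b::'a. [:a * b:] = [:a:] * [:b:]" "[:1::'a:] = 1"
  by (simp_all add: mult_pCons_left one_pCons)

lemma EP_mult: "EP P (f * g) = EP P f * EP P g"
  unfolding EP_def by (rule evalG_mult[OF pc_hom])
lemma EP_add: "EP P (f + g) = EP P f + EP P g"
  unfolding EP_def by (rule evalG_add[OF pc_hom])
lemma EP_sum: "EP P (sum F A) = (\<Sum>x\<in>A. EP P (F x))"
  unfolding EP_def by (rule evalG_sum[OF pc_hom])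
lemma EP_power: "EP P (f ^ n) = EP P f ^ n"
  unfolding EP_def by (rule evalG_power[OF pc_hom])
lemma EP_prod_mset: "EP P (prod_mset M) = prod_mset (image_mset (EP P) M)"
  unfolding EP_def by (rule evalG_prod_mset[OF pc_hom])

lemma pc_monom: "[:0, c:] = monom c 1"
  by (simp add: monom_Suc monom_0 One_nat_def)

lemma monG_EP: "monG (\<lambda>v. [:0, P v:]) \<mu> = monom (monG P \<mu>) (mdeg \<mu>)"
  by (simp add: monG_def prod_UNIV_var mdeg_def sum_UNIV_var pc_monom monom_power mult_monom)

lemma EP_expand: "EP P f = (\<Sum>\<mu>\<in>Poly_Mapping.keys f. monom (Poly_Mapping.lookup f \<mu> * monG P \<mu>) (mdeg \<mu>))"
  unfolding EP_def evalG_def monG_EP by (simp add: smult_monom)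

lemma coeff_EP: "coeff (EP P f) d = eval3 (hc d f) P"
proof -
  have "coeff (EP P f) d = (\<Sum>\<mu>\<in>Poly_Mapping.keys f. if mdeg \<mu> = d then Poly_Mapping.lookup f \<mu> * monG P \<mu> else 0)"
    by (simp add: EP_expand coeff_sum)
  also have "\<dots> = (\<Sum>\<mu>\<in>{\<mu>\<in>Poly_Mapping.keys f. mdeg \<mu> = d}. Poly_Mapping.lookup f \<mu> * monG P \<mu>)"
    by (rule sum.inter_filter[symmetric]) simp
  also have "\<dots> = eval3 (hc d f) P"
    by (simp add: eval3_evalG evalG_def keys_hc lookup_hc)
  finally show ?thesis .
qed

lemma hc_homog_same: "\<forall>\<mu>\<in>Poly_Mapping.keys g. mdeg \<mu> = d \<Longrightarrow> hc d g = g"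
  by (rule poly_mapping_eqI) (auto simp: lookup_hc in_keys_iff)

lemma hc_homog_other: "\<forall>\<mu>\<in>Poly_Mapping.keys g. mdeg \<mu> = d \<Longrightarrow> d' \<noteq> d \<Longrightarrow> hc d' g = 0"
  by (rule poly_mapping_eqI) (auto simp: lookup_hc in_keys_iff)

lemma eval3_zero: "eval3 (0::'a::comm_ring_1 mpoly3) P = 0"
  by (simp add: eval3_def)

lemma EP_homog_zero:
  fixes g :: "'a::comm_ring_1 mpoly3"
  assumes "\<forall>\<mu>\<in>Poly_Mapping.keys g. mdeg \<mu> = d" "eval3 g P = 0"
  shows "EP P g = 0"
proof (rule poly_eqI)
  fix n
  show "coeff (EP P g) n = coeff 0 n"
    using assms hc_homog_same[OF assms(1)] hc_homog_other[OF assms(1), of n]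
    by (cases "n = d") (auto simp: coeff_EP eval3_zero)
qed

lemma vanish_from_EP:
  fixes f :: "'a::field mpoly3"
  assumes "\<forall>P\<in>X. EP P f = 0"
  shows "f \<in> vanishing_ideal X"
proof -
  have *: "hc d f \<in> vanishing_ideal X" for d
    unfolding vanishing_ideal_def
  proof (rule ig_base, safe)
    show "homogeneous (hc d f)" unfolding homogeneous_def by (auto simp: keys_hc)
    fix P assume "P \<in> X"
    then show "eval3 (hc d f) P = 0" using assms coeff_EP[of P f d] by simp
  qed
  show ?thesis unfolding vanishing_ideal_def
    by (subst hc_decomp, rule ig_sum) (use * in \<open>simp add: vanishing_ideal_def\<close>)
qed




declare One_nat_def[simp del]

lemma size_filter_sum:
  "size (filter_mset p M) = (\<Sum>x\<in>{x\<in>set_mset M. p x}. count M x)"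
  by (simp add: size_multiset_overloaded_eq)

lemma filter_mono_pred:
  "(\<And>x. x \<in># M \<Longrightarrow> p x \<Longrightarrow> q x) \<Longrightarrow> filter_mset p M \<subseteq># filter_mset q M"
  unfolding subseteq_mset_def by (metis count_filter_mset count_inI le_refl zero_le)

lemma size_filter_split: "size (filter_mset p M) + size (filter_mset (\<lambda>x. \<not> p x) M) = size M"
  by (metis multiset_partition size_union)

lemma size_filter_sum_mset: "size (filter_mset p M) = (\<Sum>x\<in>#M. if p x then 1 else 0)"
  by (induction M) auto

lemma nz_fun: "(\<exists>v. P v \<noteq> 0) \<longleftrightarrow> P \<noteq> (\<lambda>_. 0)"
  by auto

lemma dot_scale: "dot a (\<lambda>v. c * P v) = c * dot a P"
  by (simp add: dot3 algebra_simps)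

lemma span2:
  fixes a b e :: "var \<Rightarrow> 'a::field"
  assumes "cross a b \<noteq> (\<lambda>_. 0)" "dot e (cross a b) = 0"
  shows "\<exists>\<alpha> \<beta>. e = (\<lambda>v. \<alpha> * a v + \<beta> * b v)"
proof -
  obtain i where i: "cross a b i \<noteq> 0" using assms(1) by auto
  define u where "u = (\<lambda>v. if v = i then (1::'a) else 0)"
  have du: "dot u (cross a b) = cross a b i" by (cases i) (simp_all add: u_def dot3)
  let ?D = "cross a b i"
  have "e = (\<lambda>v. (dot u (cross e b) / ?D) * a v + (dot u (cross a e) / ?D) * b v)"
  proof
    fix v
    have "?D * e v = dot u (cross e b) * a v + dot u (cross a e) * b v"
      using cramer[of u a b e v] assms(2) du by simp
    then show "e v = (dot u (cross e b) / ?D) * a v + (dot u (cross a e) / ?D) * b v"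
      using i by (simp add: field_simps)
  qed
  then show ?thesis by blast
qed

lemma span3:
  fixes a b c e :: "var \<Rightarrow> 'a::field"
  assumes "dot c (cross a b) \<noteq> 0"
  shows "\<exists>\<alpha> \<beta> \<gamma>. e = (\<lambda>v. \<alpha> * a v + \<beta> * b v + \<gamma> * c v)"
proof -
  let ?D = "dot c (cross a b)"
  have "e = (\<lambda>v. (dot c (cross e b) / ?D) * a v + (dot c (cross a e) / ?D) * b v + (dot e (cross a b) / ?D) * c v)"
  proof
    fix v
    have "?D * e v = dot c (cross e b) * a v + dot c (cross a e) * b v + dot e (cross a b) * c v"
      using cramer[of c a b e v] by simp
    then show "e v = (dot c (cross e b) / ?D) * a v + (dot c (cross a e) / ?D) * b v + (dot e (cross a b) / ?D) * c v"
      using assms by (simp add: field_simps)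
  qed
  then show ?thesis by blast
qed

lemma lf_special:
  "lf (\<lambda>u. (if u = w then P v else 0) - (if u = v then P w else 0)) =
     cst (P v) * Xv w - cst (P w) * (Xv v :: 'a::comm_ring_1 mpoly3)"
  by (cases v; cases w) (simp_all add: lf_def sum_UNIV_var cst_single single_diff single_uminus)

lemma dot_special: "dot (\<lambda>u. (if u = w then P v else 0) - (if u = v then P w else 0)) P = 0"
  by (cases v; cases w) (simp_all add: dot3 algebra_simps)

lemma EP_ideal:
  assumes "x \<in> ideal_gen S" "\<forall>s\<in>S. EP P s = 0"
  shows "EP P x = 0"
proof -
  obtain F r where x: "x = (\<Sum>g\<in>F. r g * g)" "F \<subseteq> S" using assms(1) unfolding ideal_gen_def by blast
  show ?thesis using x assms(2) by (auto simp: EP_sum EP_mult intro!: sum.neutral)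
qed

locale config =
  fixes X :: "'a::field pt3 set" and m :: nat and \<Lambda> :: "'a mpoly3 multiset"
  assumes finX: "finite X" and cardX: "card X = m"
    and nonzero: "\<forall>P\<in>X. (\<exists>v. P v \<noteq> 0)"
    and distinct: "\<forall>P\<in>X. \<forall>Q\<in>X. proj_eq P Q \<longrightarrow> P = Q"
    and not_collinear: "\<not> (\<exists>l. linear_form l \<and> (\<forall>P\<in>X. eval3 l P = 0))"
    and \<Lambda>_lines: "\<forall>l\<in>#\<Lambda>. linear_form l \<and> card {P\<in>X. eval3 l P = 0} \<ge> 2"
    and \<Lambda>_same: "\<forall>l\<in>#\<Lambda>. \<forall>l'\<in>#\<Lambda>. same_line l l' \<longrightarrow> l = l'"
    and \<Lambda>_mult: "\<forall>l. linear_form l \<and> card {P\<in>X. eval3 l P = 0} \<ge> 2 \<longrightarrow>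
          size (filter_mset (same_line l) \<Lambda>) = card {P\<in>X. eval3 l P = 0} - 1"
begin

definition pts :: "'a mpoly3 \<Rightarrow> 'a pt3 set" where
  "pts l = {P\<in>X. eval3 l P = 0}"

lemma pts_sub: "pts l \<subseteq> X" by (auto simp: pts_def)
lemma pts_fin: "finite (pts l)" using finX pts_sub finite_subset by blast

lemma nzX: "P \<in> X \<Longrightarrow> P \<noteq> (\<lambda>_. 0)" using nonzero by auto

lemma proj_of_cross:
  assumes "P \<noteq> (\<lambda>_. 0)" "Q \<noteq> (\<lambda>_. 0)" "cross P Q = (\<lambda>_. 0)"
  shows "proj_eq P Q"
proof -
  obtain k where k: "\<forall>v. Q v = k * P v" using cross_zero_prop assms by blast
  have "k \<noteq> 0" using k assms(2) by auto
  then show ?thesis unfolding proj_eq_def using k by blast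
qed

lemma cross_X: "P \<in> X \<Longrightarrow> Q \<in> X \<Longrightarrow> P \<noteq> Q \<Longrightarrow> cross P Q \<noteq> (\<lambda>_. 0)"
  using proj_of_cross nzX distinct by blast

lemma line_unique:
  assumes "l1 \<in># \<Lambda>" "l2 \<in># \<Lambda>" "cross P Q \<noteq> (\<lambda>_. 0)"
    "eval3 l1 P = 0" "eval3 l1 Q = 0" "eval3 l2 P = 0" "eval3 l2 Q = 0"
  shows "l1 = l2"
proof -
  have lin: "linear_form l1" "linear_form l2" using assms(1,2) \<Lambda>_lines by auto
  obtain k where k: "\<forall>v. coef l2 v = k * coef l1 v"
    using two_points_prop[OF assms(3), of "coef l1" "coef l2"] assms(4-7) lin coef_nonzero
    by (auto simp: eval3_linear)
  have "k \<noteq> 0" using k coef_nonzero[OF lin(2)] by auto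
  then have "same_line l1 l2" using coef_same_line lin k by blast
  then show ?thesis using \<Lambda>_same assms(1,2) by blast
qed

lemma count_\<Lambda>: "l \<in># \<Lambda> \<Longrightarrow> count \<Lambda> l = card (pts l) - 1"
proof -
  assume l: "l \<in># \<Lambda>"
  have "filter_mset (same_line l) \<Lambda> = filter_mset (\<lambda>x. x = l) \<Lambda>"
    by (rule filter_mset_cong) (use l \<Lambda>_same same_line_refl in auto)
  then have "size (filter_mset (same_line l) \<Lambda>) = count \<Lambda> l"
    by (simp add: filter_eq_replicate_mset)
  then show ?thesis using \<Lambda>_mult \<Lambda>_lines l unfolding pts_def by auto
qed

lemma line_exists:
  assumes "P \<in> X" "Q \<in> X" "P \<noteq> Q"
  shows "\<exists>l\<in>#\<Lambda>. eval3 l P = 0 \<and> eval3 l Q = 0"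
proof -
  let ?n = "cross P Q"
  have n: "?n \<noteq> (\<lambda>_. 0)" using cross_X assms by blast
  let ?l0 = "lf ?n"
  have lin: "linear_form ?l0" using linear_form_lf n by blast
  have e: "eval3 ?l0 P = 0" "eval3 ?l0 Q = 0"
    by (simp_all add: eval3_lf dot_comm[of _ P] dot_comm[of _ Q] dot_cross1 dot_cross2)
  have "{P, Q} \<subseteq> {R\<in>X. eval3 ?l0 R = 0}" using assms e by auto
  then have "card {R\<in>X. eval3 ?l0 R = 0} \<ge> 2"
    using card_mono[OF _ \<open>{P,Q} \<subseteq> _\<close>] finX assms(3) by fastforce
  then have "size (filter_mset (same_line ?l0) \<Lambda>) \<ge> 1" using \<Lambda>_mult lin by auto
  then have "filter_mset (same_line ?l0) \<Lambda> \<noteq> {#}"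
    by (metis not_one_le_zero size_empty)
  then obtain l where l: "l \<in># filter_mset (same_line ?l0) \<Lambda>"
    by (meson multiset_nonemptyE)
  then have "l \<in># \<Lambda>" "same_line ?l0 l" by auto
  then obtain c where "l = Poly_Mapping.map (\<lambda>a. c * a) ?l0" unfolding same_line_def by blast
  then have "eval3 l P = 0" "eval3 l Q = 0" using e by (simp_all add: eval3_map)
  then show ?thesis using \<open>l \<in># \<Lambda>\<close> by blast
qed

lemma count_P:
  assumes P: "P \<in> X"
  shows "size (filter_mset (\<lambda>l. eval3 l P = 0) \<Lambda>) = m - 1"
proof -
  let ?L = "{l\<in>set_mset \<Lambda>. eval3 l P = 0}"
  have "size (filter_mset (\<lambda>l. eval3 l P = 0) \<Lambda>) = (\<Sum>l\<in>?L. count \<Lambda> l)"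
    by (rule size_filter_sum)
  also have "\<dots> = (\<Sum>l\<in>?L. card (pts l - {P}))"
  proof (rule sum.cong[OF refl])
    fix l assume "l \<in> ?L"
    then have "P \<in> pts l" "l \<in># \<Lambda>" using P by (auto simp: pts_def)
    then show "count \<Lambda> l = card (pts l - {P})" using count_\<Lambda> pts_fin by simp
  qed
  also have "\<dots> = card (\<Union>l\<in>?L. pts l - {P})"
  proof (rule card_UN_disjoint[symmetric])
    show "finite ?L" by simp
    show "\<forall>i\<in>?L. finite (pts i - {P})" using pts_fin by simp
    show "\<forall>i\<in>?L. \<forall>j\<in>?L. i \<noteq> j \<longrightarrow> (pts i - {P}) \<inter> (pts j - {P}) = {}"
    proof (intro ballI impI)
      fix i j assume ij: "i \<in> ?L" "j \<in> ?L" "i \<noteq> j"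
      show "(pts i - {P}) \<inter> (pts j - {P}) = {}"
      proof (rule ccontr)
        assume "(pts i - {P}) \<inter> (pts j - {P}) \<noteq> {}"
        then obtain Q where Q: "Q \<in> X" "Q \<noteq> P" "eval3 i Q = 0" "eval3 j Q = 0"
          by (auto simp: pts_def)
        have "i = j" by (rule line_unique[of i j P Q]) (use ij Q cross_X P in auto)
        then show False using ij by blast
      qed
    qed
  qed
  also have "(\<Union>l\<in>?L. pts l - {P}) = X - {P}"
  proof
    show "(\<Union>l\<in>?L. pts l - {P}) \<subseteq> X - {P}" using pts_sub by auto
    show "X - {P} \<subseteq> (\<Union>l\<in>?L. pts l - {P})"
    proof
      fix Q assume "Q \<in> X - {P}"
      then obtain l where "l \<in># \<Lambda>" "eval3 l P = 0" "eval3 l Q = 0" using line_exists P by blast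
      then show "Q \<in> (\<Union>l\<in>?L. pts l - {P})" using \<open>Q \<in> X - {P}\<close> by (auto simp: pts_def)
    qed
  qed
  also have "card (X - {P}) = m - 1" using P finX cardX by simp
  finally show ?thesis .
qed

lemma count_Q:
  assumes Q: "Q \<noteq> (\<lambda>_. 0)" and nX: "\<forall>P\<in>X. \<not> proj_eq P Q"
    and l12: "l1 \<in># \<Lambda>" "l2 \<in># \<Lambda>" "\<not> same_line l1 l2" "eval3 l1 Q = 0" "eval3 l2 Q = 0"
  shows "size (filter_mset (\<lambda>l. eval3 l Q = 0) \<Lambda>) \<le> m - 2"
proof -
  let ?L = "{l\<in>set_mset \<Lambda>. eval3 l Q = 0}"
  have fin: "finite ?L" by simp
  have disj: "\<forall>i\<in>?L. \<forall>j\<in>?L. i \<noteq> j \<longrightarrow> pts i \<inter> pts j = {}"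
  proof (intro ballI impI)
    fix i j assume ij: "i \<in> ?L" "j \<in> ?L" "i \<noteq> j"
    show "pts i \<inter> pts j = {}"
    proof (rule ccontr)
      assume "pts i \<inter> pts j \<noteq> {}"
      then obtain P where P: "P \<in> X" "eval3 i P = 0" "eval3 j P = 0" by (auto simp: pts_def)
      have "cross P Q \<noteq> (\<lambda>_. 0)" using proj_of_cross nzX[OF P(1)] Q nX P(1) by blast
      then have "i = j" using line_unique[of i j P Q] ij P by auto
      then show False using ij by blast
    qed
  qed
  have two: "card ?L \<ge> 2"
  proof -
    have "l1 \<noteq> l2" using l12(3) same_line_refl by blast
    then have "card {l1, l2} = 2" by simp
    moreover have "{l1, l2} \<subseteq> ?L" using l12 by auto
    ultimately show ?thesis using card_mono[OF fin, of "{l1, l2}"] by simp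
  qed
  have ge1: "\<forall>l\<in>?L. card (pts l) \<ge> 1" using \<Lambda>_lines unfolding pts_def by fastforce
  have A: "size (filter_mset (\<lambda>l. eval3 l Q = 0) \<Lambda>) = (\<Sum>l\<in>?L. card (pts l) - 1)"
    unfolding size_filter_sum by (rule sum.cong[OF refl]) (simp add: count_\<Lambda>)
  have B: "(\<Sum>l\<in>?L. card (pts l) - 1) + card ?L = (\<Sum>l\<in>?L. card (pts l))"
  proof -
    have "(\<Sum>l\<in>?L. card (pts l) - 1) + card ?L = (\<Sum>l\<in>?L. card (pts l) - 1 + 1)"
      by (simp add: sum.distrib)
    also have "\<dots> = (\<Sum>l\<in>?L. card (pts l))" by (rule sum.cong) (use ge1 in auto)
    finally show ?thesis .
  qed
  have C: "(\<Sum>l\<in>?L. card (pts l)) = card (\<Union>l\<in>?L. pts l)"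
    by (rule card_UN_disjoint[symmetric]) (use fin pts_fin disj in auto)
  have D: "card (\<Union>l\<in>?L. pts l) \<le> m"
    using card_mono[OF finX, of "\<Union>l\<in>?L. pts l"] pts_sub cardX by blast
  show ?thesis unfolding A using B C D two by arith
qed


lemma X_ne: "X \<noteq> {}"
proof
  assume "X = {}"
  let ?c = "\<lambda>v. if v = VX then (1::'a) else 0"
  have "linear_form (lf ?c)" by (rule linear_form_lf) (auto simp: fun_eq_iff)
  then show False using not_collinear \<open>X = {}\<close> by blast
qed

lemma m_ge2: "m \<ge> 2"
proof (rule ccontr)
  assume "\<not> m \<ge> 2"
  moreover have "m \<noteq> 0" using X_ne finX cardX by auto
  ultimately have "card X = 1" using cardX by simp
  then obtain P where XP: "X = {P}" by (rule card_1_singletonE)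
  obtain c where c: "c \<noteq> (\<lambda>_. 0)" "dot c P = 0"
  proof (cases "P VX = 0")
    case True
    show ?thesis by (rule that[of "\<lambda>v. if v = VX then 1 else 0"]) (auto simp: fun_eq_iff dot3 True)
  next
    case False
    show ?thesis by (rule that[of "\<lambda>v. case v of VX \<Rightarrow> P VY | VY \<Rightarrow> - P VX | VZ \<Rightarrow> 0"])
      (use False in \<open>auto simp: fun3_zero dot3 algebra_simps\<close>)
  qed
  have "linear_form (lf c)" using linear_form_lf c by blast
  moreover have "\<forall>Q\<in>X. eval3 (lf c) Q = 0" using XP c by (simp add: eval3_lf)
  ultimately show False using not_collinear by blast
qed

lemma N_ge: "size \<Lambda> \<ge> m - 1"
proof -
  obtain P where "P \<in> X" using X_ne by blast
  then show ?thesis using count_P[of P] size_filter_mset_lesseq[of "\<lambda>l. eval3 l P = 0" \<Lambda>] by simp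
qed

lemma sum_sum_mset_swap:
  "(\<Sum>P\<in>A. \<Sum>l\<in>#M. f P l) = (\<Sum>l\<in>#M. \<Sum>P\<in>A. (f P l :: nat))"
  by (induction M) (auto simp: sum.distrib)

lemma card_pts_sum: "card (pts l) = (\<Sum>P\<in>X. if eval3 l P = 0 then 1 else 0)"
proof -
  have "(\<Sum>P\<in>X. if eval3 l P = 0 then 1 else 0) = (\<Sum>P\<in>{P\<in>X. eval3 l P = 0}. (1::nat))"
    by (rule sum.inter_filter[symmetric]) (rule finX)
  then show ?thesis by (simp add: pts_def)
qed

lemma N_bound: "size \<Lambda> \<le> m choose 2"
proof -
  have e1: "(\<Sum>P\<in>X. size (filter_mset (\<lambda>l. eval3 l P = 0) \<Lambda>)) = (\<Sum>P\<in>X. m - 1)"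
    by (rule sum.cong[OF refl]) (rule count_P)
  have e1': "(\<Sum>P\<in>X. m - 1) = m * (m - 1)" using cardX by simp
  have "(\<Sum>P\<in>X. size (filter_mset (\<lambda>l. eval3 l P = 0) \<Lambda>)) =
        (\<Sum>P\<in>X. \<Sum>l\<in>#\<Lambda>. if eval3 l P = 0 then 1 else 0)"
    by (rule sum.cong[OF refl]) (rule size_filter_sum_mset)
  also have "\<dots> = (\<Sum>l\<in>#\<Lambda>. \<Sum>P\<in>X. if eval3 l P = 0 then 1 else 0)"
    by (rule sum_sum_mset_swap)
  also have "\<dots> = (\<Sum>l\<in>#\<Lambda>. card (pts l))"
    by (simp only: card_pts_sum)
  finally have e2: "(\<Sum>P\<in>X. size (filter_mset (\<lambda>l. eval3 l P = 0) \<Lambda>)) = (\<Sum>l\<in>#\<Lambda>. card (pts l))" .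
  have e3: "(\<Sum>l\<in>#\<Lambda>. card (pts l)) \<ge> (\<Sum>l\<in>#\<Lambda>. 2)"
    by (rule sum_mset_mono) (use \<Lambda>_lines in \<open>auto simp: pts_def\<close>)
  have e4: "(\<Sum>l\<in>#\<Lambda>. (2::nat)) = 2 * size \<Lambda>"
    by (induction \<Lambda>) auto
  have "2 * size \<Lambda> \<le> m * (m - 1)" using e1 e1' e2 e3 e4 by linarith
  then have "(2 * size \<Lambda>) div 2 \<le> m * (m - 1) div 2" by (rule div_le_mono)
  then show ?thesis by (simp add: choose_two)
qed


lemma T_lemma:
  fixes T :: "'a mpoly3 set" and g :: "'a mpoly3"
  assumes hom: "homogeneous g" and van: "\<forall>P\<in>X. eval3 g P = 0"
    and sz: "size (filter_mset (\<lambda>l. l \<notin> ideal_gen T) \<Lambda>) < size \<Lambda> - (m - 1) + 1"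
  shows "g \<in> ideal_gen T"
proof -
  let ?S = "filter_mset (\<lambda>l. l \<in> ideal_gen T) \<Lambda>"
  have szS: "size ?S \<ge> m - 1"
    using sz size_filter_split[of "\<lambda>l. l \<in> ideal_gen T" \<Lambda>] N_ge by linarith
  have m2: "m \<ge> 2" by (rule m_ge2)
  obtain P0 where P0: "P0 \<in> X" using X_ne by blast
  have key: "\<exists>P\<in>X. \<forall>e. dot e P = 0 \<longrightarrow> lf e \<in> ideal_gen T"
  proof -
    have "?S \<noteq> {#}"
    proof
      assume "?S = {#}"
      then have "size ?S = 0" by simp
      then show False using szS m2 by arith
    qed
    then obtain l1 where l1: "l1 \<in># ?S" by (meson multiset_nonemptyE)
    have "\<exists>l2\<in>#?S. \<not> same_line l1 l2"
    proof (rule ccontr)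
      assume "\<not> (\<exists>l2\<in>#?S. \<not> same_line l1 l2)"
      then have all: "\<forall>l2\<in>#?S. l2 = l1" using \<Lambda>_same l1 by auto
      have l1L: "l1 \<in># \<Lambda>" using l1 by simp
      have "?S \<subseteq># filter_mset (\<lambda>x. x = l1) \<Lambda>"
        by (rule filter_mono_pred) (use all in auto)
      then have "size ?S \<le> count \<Lambda> l1"
        using size_mset_mono by (fastforce simp: filter_eq_replicate_mset)
      also have "\<dots> = card (pts l1) - 1" using count_\<Lambda> l1L by blast
      finally have c1: "size ?S \<le> card (pts l1) - 1" .
      have c2: "card (pts l1) < m"
      proof -
        have "pts l1 \<noteq> X"
        proof
          assume "pts l1 = X"
          then have "\<forall>P\<in>X. eval3 l1 P = 0" by (auto simp: pts_def)
          then show False using not_collinear \<Lambda>_lines l1L by blast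
        qed
        then have "pts l1 \<subset> X" using pts_sub by blast
        then show ?thesis using psubset_card_mono[OF finX] cardX by blast
      qed
      show False using szS c1 c2 m2 by arith
    qed
    then obtain l2 where l2: "l2 \<in># ?S" "\<not> same_line l1 l2" by blast
    have l12: "l1 \<in># \<Lambda>" "l2 \<in># \<Lambda>" "l1 \<in> ideal_gen T" "l2 \<in> ideal_gen T" using l1 l2 by auto
    have lin: "linear_form l1" "linear_form l2" using l12 \<Lambda>_lines by auto
    let ?a = "coef l1" and ?b = "coef l2"
    let ?n = "cross ?a ?b"
    have n: "?n \<noteq> (\<lambda>_. 0)"
    proof
      assume "?n = (\<lambda>_. 0)"
      then obtain k where k: "\<forall>v. ?b v = k * ?a v" using cross_zero_prop coef_nonzero[OF lin(1)] by blast
      have "k \<noteq> 0" using k coef_nonzero[OF lin(2)] by auto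
      then have "same_line l1 l2" using coef_same_line[OF lin(1) lin(2) _ k] by simp
      then show False using l2 by blast
    qed
    have ev12: "eval3 l1 ?n = 0" "eval3 l2 ?n = 0"
      using lin by (simp_all add: eval3_linear dot_cross1 dot_cross2)
    have lfa: "lf ?a = l1" "lf ?b = l2" using lin lf_coef by auto
    show ?thesis
    proof (cases "\<forall>l\<in>#?S. eval3 l ?n = 0")
      case True
      have "?S \<subseteq># filter_mset (\<lambda>l. eval3 l ?n = 0) \<Lambda>"
        by (rule filter_mono_pred) (use True in auto)
      then have ge: "size (filter_mset (\<lambda>l. eval3 l ?n = 0) \<Lambda>) \<ge> m - 1"
        using size_mset_mono[OF \<open>?S \<subseteq># _\<close>] szS by linarith
      have "\<not> (\<forall>P\<in>X. \<not> proj_eq P ?n)"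
      proof
        assume h: "\<forall>P\<in>X. \<not> proj_eq P ?n"
        have "size (filter_mset (\<lambda>l. eval3 l ?n = 0) \<Lambda>) \<le> m - 2"
          by (rule count_Q[OF n h l12(1,2) l2(2) ev12])
        then show False using ge m2 by arith
      qed
      then obtain P c where P: "P \<in> X" "c \<noteq> 0" "\<forall>v. ?n v = c * P v"
        unfolding proj_eq_def by blast
      have nP: "?n = (\<lambda>v. c * P v)" using P by auto
      show ?thesis
      proof (intro bexI[OF _ P(1)] allI impI)
        fix e assume e: "dot e P = 0"
        have "dot e ?n = 0" unfolding nP dot_scale e by simp
        then obtain \<alpha> \<beta> where "e = (\<lambda>v. \<alpha> * ?a v + \<beta> * ?b v)" using span2[OF n] by blast
        then have "lf e = cst \<alpha> * l1 + cst \<beta> * l2" by (simp add: lf_lin lfa)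
        then show "lf e \<in> ideal_gen T" using l12 by (simp add: ig_add ig_mult)
      qed
    next
      case False
      then obtain l3 where l3: "l3 \<in># ?S" "eval3 l3 ?n \<noteq> 0" by blast
      have lin3: "linear_form l3" using l3 \<Lambda>_lines by auto
      have l3T: "l3 \<in> ideal_gen T" using l3 by simp
      have D: "dot (coef l3) ?n \<noteq> 0" using l3 lin3 by (simp add: eval3_linear)
      show ?thesis
      proof (intro bexI[OF _ P0] allI impI)
        fix e
        obtain \<alpha> \<beta> \<gamma> where "e = (\<lambda>v. \<alpha> * ?a v + \<beta> * ?b v + \<gamma> * coef l3 v)" using span3[OF D] by blast
        then have "lf e = cst \<alpha> * l1 + cst \<beta> * l2 + cst \<gamma> * l3" by (simp add: lf_lin3 lfa lf_coef[OF lin3])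
        then show "lf e \<in> ideal_gen T" using l12 l3T by (simp add: ig_add ig_mult)
      qed
    qed
  qed
  then obtain P where P: "P \<in> X" "\<forall>e. dot e P = 0 \<longrightarrow> lf e \<in> ideal_gen T" by blast
  obtain v where v: "P v \<noteq> 0" using nonzero P(1) by blast
  obtain d where d: "\<forall>\<mu>\<in>Poly_Mapping.keys g. mdeg \<mu> = d" using hom unfolding homogeneous_def by blast
  show ?thesis
  proof (rule HOM[where P=P and v=v, OF v d])
    show "eval3 g P = 0" using van P by blast
    show "\<forall>w. cst (P v) * Xv w - cst (P w) * Xv v \<in> ideal_gen T"
    proof
      fix w
      show "cst (P v) * Xv w - cst (P w) * Xv v \<in> ideal_gen T"
        using P(2)[rule_format, OF dot_special[of w P v]] lf_special[of w P v] by simp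
    qed
  qed
qed


lemma rad_sub:
  assumes "f \<in> radical (I_a (size \<Lambda> - (m - 1) + 1) \<Lambda>)"
  shows "f \<in> vanishing_ideal X"
proof -
  let ?a = "size \<Lambda> - (m - 1) + 1"
  obtain k where "f ^ k \<in> I_a ?a \<Lambda>"
    using assms unfolding radical_def by blast
  then have k: "f ^ k \<in> ideal_gen (Gens ?a \<Lambda>)" by (simp add: I_a_def Gens_def)
  have "EP P f = 0" if P: "P \<in> X" for P
  proof -
    have gens: "\<forall>s\<in>Gens ?a \<Lambda>. EP P s = 0"
    proof
      fix s assume "s \<in> Gens ?a \<Lambda>"
      then obtain M where M: "s = prod_mset M" "M \<subseteq># \<Lambda>" "size M = ?a" unfolding Gens_def by blast
      have "\<exists>l\<in>#M. eval3 l P = 0"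
      proof (rule ccontr)
        assume nex: "\<not> (\<exists>l\<in>#M. eval3 l P = 0)"
        have sub: "M \<subseteq># filter_mset (\<lambda>l. \<not> eval3 l P = 0) \<Lambda>"
          unfolding subseteq_mset_def
        proof
          fix x
          show "count M x \<le> count (filter_mset (\<lambda>l. \<not> eval3 l P = 0) \<Lambda>) x"
          proof (cases "x \<in># M")
            case True
            then have "eval3 x P \<noteq> 0" using nex by blast
            then show ?thesis using M(2) by (simp add: mset_subset_eq_count)
          next
            case False then show ?thesis by (simp add: not_in_iff)
          qed
        qed
        have "size M \<le> size (filter_mset (\<lambda>l. \<not> eval3 l P = 0) \<Lambda>)" by (rule size_mset_mono[OF sub])
        moreover have "size (filter_mset (\<lambda>l. \<not> eval3 l P = 0) \<Lambda>) = size \<Lambda> - (m - 1)"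
          using size_filter_split[of "\<lambda>l. eval3 l P = 0" \<Lambda>] count_P[OF P] by simp
        ultimately show False using M(3) by simp
      qed
      then obtain l where l: "l \<in># M" "eval3 l P = 0" by blast
      have "l \<in># \<Lambda>" by (rule mset_subset_eqD[OF M(2) l(1)])
      then have "linear_form l" using \<Lambda>_lines by simp
      then have "\<forall>\<mu>\<in>Poly_Mapping.keys l. mdeg \<mu> = 1" unfolding linear_form_def by blast
      then have "EP P l = 0" by (rule EP_homog_zero) (rule l(2))
      then have "0 \<in># image_mset (EP P) M" using l(1) by (metis image_eqI set_image_mset)
      then show "EP P s = 0" using M(1) by (simp add: EP_prod_mset)
    qed
    have "EP P (f ^ k) = 0" by (rule EP_ideal[OF k gens])
    then show ?thesis by (simp add: EP_power)
  qed
  then show ?thesis by (intro vanish_from_EP) auto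
qed

lemma rad_sup: "vanishing_ideal X \<subseteq> radical (I_a (size \<Lambda> - (m - 1) + 1) \<Lambda>)"
  unfolding vanishing_ideal_def I_a_Gens
proof (rule rad_ig_sub, safe)
  fix g :: "'a mpoly3" assume g: "homogeneous g" "\<forall>P\<in>X. eval3 g P = 0"
  show "g \<in> radical (ideal_gen (Gens (size \<Lambda> - (m - 1) + 1) \<Lambda> \<union> {}))"
  proof (rule IND)
    fix T :: "'a mpoly3 set"
    assume "{} \<subseteq> T" "size (filter_mset (\<lambda>l. l \<notin> ideal_gen T) \<Lambda>) < size \<Lambda> - (m - 1) + 1"
    then show "g \<in> ideal_gen T" by (intro T_lemma[OF g(1) g(2)]) simp
  qed
qed

end

theorem mainTheorem3:
  fixes X :: "'a::field pt3 set" and m :: nat and \<Lambda> :: "'a mpoly3 multiset"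
  assumes finX: "finite X" and cardX: "card X = m"
    and nonzero: "\<forall>P\<in>X. (\<exists>v. P v \<noteq> 0)"
    and distinct: "\<forall>P\<in>X. \<forall>Q\<in>X. proj_eq P Q \<longrightarrow> P = Q"
    and not_collinear: "\<not> (\<exists>l. linear_form l \<and> (\<forall>P\<in>X. eval3 l P = 0))"
    and \<Lambda>_lines: "\<forall>l\<in>#\<Lambda>. linear_form l \<and> card {P\<in>X. eval3 l P = 0} \<ge> 2"
    and \<Lambda>_same: "\<forall>l\<in>#\<Lambda>. \<forall>l'\<in>#\<Lambda>. same_line l l' \<longrightarrow> l = l'"
    and \<Lambda>_mult: "\<forall>l. linear_form l \<and> card {P\<in>X. eval3 l P = 0} \<ge> 2 \<longrightarrow>
          size (filter_mset (same_line l) \<Lambda>) = card {P\<in>X. eval3 l P = 0} - 1"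
  shows "size \<Lambda> \<le> m choose 2 \<and>
    radical (I_a (size \<Lambda> - (m - 1) + 1) \<Lambda>) = vanishing_ideal X \<and>
    (\<forall>P\<in>X. size (filter_mset (\<lambda>l. eval3 l P = 0) \<Lambda>) = m - 1) \<and>
    (\<forall>Q. (\<exists>v. Q v \<noteq> 0) \<and> (\<forall>P\<in>X. \<not> proj_eq P Q) \<and>
           (\<exists>l1\<in>#\<Lambda>. \<exists>l2\<in>#\<Lambda>. \<not> same_line l1 l2 \<and> eval3 l1 Q = 0 \<and> eval3 l2 Q = 0)
           \<longrightarrow> size (filter_mset (\<lambda>l. eval3 l Q = 0) \<Lambda>) \<le> m - 2)"
proof -
  interpret C: config X m \<Lambda>
    by (rule config.intro) (fact assms)+
  have r: "radical (I_a (size \<Lambda> - (m - 1) + 1) \<Lambda>) = vanishing_ideal X"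
  proof
    show "radical (I_a (size \<Lambda> - (m - 1) + 1) \<Lambda>) \<subseteq> vanishing_ideal X"
      using C.rad_sub by (rule subsetI)
    show "vanishing_ideal X \<subseteq> radical (I_a (size \<Lambda> - (m - 1) + 1) \<Lambda>)" by (rule C.rad_sup)
  qed
  have q: "\<forall>Q. (\<exists>v. Q v \<noteq> 0) \<and> (\<forall>P\<in>X. \<not> proj_eq P Q) \<and>
           (\<exists>l1\<in>#\<Lambda>. \<exists>l2\<in>#\<Lambda>. \<not> same_line l1 l2 \<and> eval3 l1 Q = 0 \<and> eval3 l2 Q = 0)
           \<longrightarrow> size (filter_mset (\<lambda>l. eval3 l Q = 0) \<Lambda>) \<le> m - 2"
  proof (intro allI impI, elim conjE bexE)
    fix Q l1 l2
    assume h: "\<exists>v. Q v \<noteq> 0" "\<forall>P\<in>X. \<not> proj_eq P Q" "l1 \<in># \<Lambda>" "l2 \<in># \<Lambda>"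
      "\<not> same_line l1 l2" "eval3 l1 Q = 0" "eval3 l2 Q = 0"
    have "Q \<noteq> (\<lambda>_. 0)" using h(1) by auto
    then show "size (filter_mset (\<lambda>l. eval3 l Q = 0) \<Lambda>) \<le> m - 2"
      by (rule C.count_Q[OF _ h(2-7)])
  qed
  show ?thesis using C.N_bound r C.count_P q by (intro conjI) auto
qed


end
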